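(* Let $M\ge1$, let $(\tau,R)$ be an $M$-layer medium, let $\mathsf{p}\in\mathsf{S}_M$, and set $(k,b)=(\kappa(\mathsf{p}),\beta(\mathsf{p}))$. Then \[ w(\mathsf{p})=(-R)^{\tilde{k}-b}R^{k-b}T^{2b}. \]
   Context: Fix depths $z_{-1}<z_0<\cdots<z_M$ and reals $R=(R_0,\ldots,R_M)$ with $-1<R_n<1$ (the travel times $\tau$ play no role); $T_n=\sqrt{1-R_n^2}$, $T=(T_0,\ldots,T_M)$. A (reflection) scattering sequence is a finite sequence $\mathsf{p}=(\mathsf{p}_0,\ldots,\mathsf{p}_L)$ with $L\geq 2$, $\mathsf{p}_0=\mathsf{p}_L=z_{-1}$, $\mathsf{p}_i\in\{z_0,\ldots,z_M\}$ for $1\le i\le L-1$, and for every $0\le i\le L-1$ there is $-1\le j\le M-1$ with $\{\mathsf{p}_i,\mathsf{p}_{i+1}\}=\{z_j,z_{j+1}\}$; $\mathsf{S}_M$ is the set of these. The weight is $w(\mathsf{p})=\prod_{i=1}^{L-1}w_i$ where, if $\mathsf{p}_i=z_j$: $w_i=R_j$ if $\mathsf{p}_{i-1}=\mathsf{p}_{i+1}=z_{j-1}$; $w_i=-R_j$ if $\mathsf{p}_{i-1}=\mathsf{p}_{i+1}=z_{j+1}$; $w_i=T_j$ otherwise. For $0\le n\le M$, $k_n$ is the number of maximal runs of consecutive indices $i$ with $\mathsf{p}_i\in\{z_n,\ldots,z_M\}$, and $b_n$ the number of those runs of length at least 2; $\kappa(\mathsf{p})=(k_0,\ldots,k_M)$,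 $\beta(\mathsf{p})=(b_0,\ldots,b_M)$. Notation: $\tilde{k}=(k_1,\ldots,k_M,0)$; vector arithmetic entrywise; $s^d=\prod_{n=0}^M s_n^{d_n}$ with $0^0=1$. *)

theory Defs
  imports Complex_Main
begin

(* Depth z_j is represented by its index j :: int, -1 <= j <= M (the depths are
   strictly increasing, so p_i = z_j determines j uniquely). *)

definition scat_seq :: "nat \<Rightarrow> int list \<Rightarrow> bool" where
  "scat_seq M p \<longleftrightarrow>
     (let L = length p - 1 in
       length p \<ge> 3 \<and> p ! 0 = -1 \<and> p ! L = -1 \<and>
       (\<forall>i. 1 \<le> i \<and> i \<le> L - 1 \<longrightarrow> 0 \<le> p ! i \<and> p ! i \<le> int M) \<and>
       (\<forall>i < L. \<exists>j::int. -1 \<le> j \<and> j \<le> int M - 1 \<and>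
                  {p ! i, p ! (i+1)} = {j, j+1}))"

definition trans_coeff :: "(nat \<Rightarrow> real) \<Rightarrow> nat \<Rightarrow> real" where
  "trans_coeff R n = sqrt (1 - (R n)\<^sup>2)"

definition local_weight :: "(nat \<Rightarrow> real) \<Rightarrow> int list \<Rightarrow> nat \<Rightarrow> real" where
  "local_weight R p i =
     (let j = p ! i in
       if p ! (i-1) = j - 1 \<and> p ! (i+1) = j - 1 then R (nat j)
       else if p ! (i-1) = j + 1 \<and> p ! (i+1) = j + 1 then - R (nat j)
       else trans_coeff R (nat j))"

definition weight :: "(nat \<Rightarrow> real) \<Rightarrow> int list \<Rightarrow> real" where
  "weight R p = (\<Prod>i\<in>{1..length p - 2}. local_weight R p i)"

definition runs :: "int list \<Rightarrow> nat \<Rightarrow> (nat \<times> nat) set" where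
  "runs p n = {(a, b). a \<le> b \<and> b \<le> length p - 1 \<and>
        (\<forall>i. a \<le> i \<and> i \<le> b \<longrightarrow> p ! i \<ge> int n) \<and>
        (a = 0 \<or> p ! (a - 1) < int n) \<and>
        (b = length p - 1 \<or> p ! (b + 1) < int n)}"

definition kappa :: "int list \<Rightarrow> nat \<Rightarrow> nat" where
  "kappa p n = card (runs p n)"

definition beta :: "int list \<Rightarrow> nat \<Rightarrow> nat" where
  "beta p n = card {(a, b) \<in> runs p n. b - a + 1 \<ge> 2}"

definition kappa_tilde :: "nat \<Rightarrow> int list \<Rightarrow> nat \<Rightarrow> nat" where
  "kappa_tilde M p n = (if n < M then kappa p (n+1) else 0)"

end

theory Submission
  imports Defs
begin

definition II :: "int list \<Rightarrow> nat set" where "II p = {1..length p - 2}"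
definition St :: "int list \<Rightarrow> nat \<Rightarrow> nat set" where
  "St p m = {a\<in>II p. p!a = int m \<and> p!(a-1) = int m - 1}"
definition Up :: "int list \<Rightarrow> nat \<Rightarrow> nat set" where
  "Up p m = {a\<in>II p. p!a = int m \<and> p!(a-1) = int m - 1 \<and> p!(a+1) = int m + 1}"
definition Pk :: "int list \<Rightarrow> nat \<Rightarrow> nat set" where
  "Pk p m = {a\<in>II p. p!a = int m \<and> p!(a-1) = int m - 1 \<and> p!(a+1) = int m - 1}"
definition Dn :: "int list \<Rightarrow> nat \<Rightarrow> nat set" where
  "Dn p m = {a\<in>II p. p!a = int m \<and> p!(a-1) = int m + 1 \<and> p!(a+1) = int m - 1}"
definition Vl :: "int list \<Rightarrow> nat \<Rightarrow> nat set" where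
  "Vl p m = {a\<in>II p. p!a = int m \<and> p!(a-1) = int m + 1 \<and> p!(a+1) = int m + 1}"
definition Vs :: "int list \<Rightarrow> nat \<Rightarrow> nat set" where
  "Vs p m = {a\<in>II p. p!a = int m \<and> p!(a+1) = int m + 1}"

lemma run_le:
  assumes r1: "(a1,b1) \<in> runs p m" and r2: "(a2,b2) \<in> runs p m"
    and "a1 \<le> i" "i \<le> b1" "a2 \<le> i" "i \<le> b2"
  shows "a2 \<le> a1 \<and> b2 \<le> b1"
proof
  show "a2 \<le> a1"
  proof (rule ccontr)
    assume "\<not> a2 \<le> a1"
    then have h: "a2 \<noteq> 0" "a1 \<le> a2 - 1" "a2 - 1 \<le> b1" using assms by auto
    have "p!(a2-1) < int m" using r2 h(1) unfolding runs_def by auto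
    moreover have "p!(a2-1) \<ge> int m" using r1 h(2,3) unfolding runs_def by blast
    ultimately show False by simp
  qed
  show "b2 \<le> b1"
  proof (rule ccontr)
    assume "\<not> b2 \<le> b1"
    then have "b1 \<noteq> length p - 1" "a2 \<le> b1 + 1" "b1 + 1 \<le> b2" using assms r2
      unfolding runs_def by auto
    then have h: "b1 \<noteq> length p - 1" "a2 \<le> b1 + 1" "b1 + 1 \<le> b2" .
    have "p!(b1+1) < int m" using r1 h(1) unfolding runs_def by auto
    moreover have "p!(b1+1) \<ge> int m" using r2 h(2,3) unfolding runs_def by blast
    ultimately show False by simp
  qed
qed

lemma run_unique:
  assumes "(a1,b1) \<in> runs p m" "(a2,b2) \<in> runs p m"
    "a1 \<le> i" "i \<le> b1" "a2 \<le> i" "i \<le> b2"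
  shows "a1 = a2 \<and> b1 = b2"
  using run_le[OF assms] run_le[OF assms(2,1,5,6,3,4)] by auto

lemma run_exists:
  assumes i: "i \<le> length p - 1" and pi: "p!i \<ge> int m"
  shows "\<exists>a b. (a,b) \<in> runs p m \<and> a \<le> i \<and> i \<le> b"
proof -
  define A where "A = {a. a \<le> i \<and> (\<forall>k. a \<le> k \<and> k \<le> i \<longrightarrow> p!k \<ge> int m)}"
  define B where "B = {b. i \<le> b \<and> b \<le> length p - 1 \<and> (\<forall>k. i \<le> k \<and> k \<le> b \<longrightarrow> p!k \<ge> int m)}"
  have fA: "finite A" unfolding A_def by (rule finite_subset[of _ "{..i}"]) auto
  have fB: "finite B" unfolding B_def by (rule finite_subset[of _ "{..length p - 1}"]) auto
  have iA: "i \<in> A" using pi unfolding A_def by (auto simp: le_antisym)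
  have iB: "i \<in> B" using pi i unfolding B_def by (auto simp: le_antisym)
  define a where "a = Min A"
  define b where "b = Max B"
  have aA: "a \<in> A" using fA iA Min_in unfolding a_def by blast
  have bB: "b \<in> B" using fB iB Max_in unfolding b_def by blast
  have amin: "\<And>x. x \<in> A \<Longrightarrow> a \<le> x" using fA unfolding a_def by simp
  have bmax: "\<And>x. x \<in> B \<Longrightarrow> x \<le> b" using fB unfolding b_def by simp
  have all: "\<forall>k. a \<le> k \<and> k \<le> b \<longrightarrow> p!k \<ge> int m"
  proof (intro allI impI)
    fix k assume k: "a \<le> k \<and> k \<le> b"
    show "p!k \<ge> int m"
    proof (cases "k \<le> i")
      case True then show ?thesis using aA k unfolding A_def by auto
    next
      case False then show ?thesis using bB k unfolding B_def by auto
    qed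
  qed
  have left: "a = 0 \<or> p!(a-1) < int m"
  proof (rule ccontr)
    assume "\<not> (a = 0 \<or> p!(a-1) < int m)"
    then have a0: "a \<noteq> 0" and pa: "p!(a-1) \<ge> int m" by auto
    have "a - 1 \<in> A" unfolding A_def
    proof (intro CollectI conjI allI impI)
      show "a - 1 \<le> i" using aA unfolding A_def by auto
      fix k assume k: "a - 1 \<le> k \<and> k \<le> i"
      show "p!k \<ge> int m"
      proof (cases "k = a - 1")
        case True then show ?thesis using pa by simp
      next
        case False then show ?thesis using aA k unfolding A_def by auto
      qed
    qed
    then have "a \<le> a - 1" using amin by blast
    then show False using a0 by simp
  qed
  have right: "b = length p - 1 \<or> p!(b+1) < int m"
  proof (rule ccontr)
    assume "\<not> (b = length p - 1 \<or> p!(b+1) < int m)"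
    then have b0: "b \<noteq> length p - 1" and pb: "p!(b+1) \<ge> int m" by auto
    have "b + 1 \<in> B" unfolding B_def
    proof (intro CollectI conjI allI impI)
      show "i \<le> b + 1" using bB unfolding B_def by auto
      show "b + 1 \<le> length p - 1" using bB b0 unfolding B_def by auto
      fix k assume k: "i \<le> k \<and> k \<le> b + 1"
      show "p!k \<ge> int m"
      proof (cases "k = b + 1")
        case True then show ?thesis using pb by simp
      next
        case False then show ?thesis using bB k unfolding B_def by auto
      qed
    qed
    then have "b + 1 \<le> b" using bmax by blast
    then show False by simp
  qed
  have "a \<le> i" "i \<le> b" "b \<le> length p - 1" using aA bB unfolding A_def B_def by auto
  then have "(a,b) \<in> runs p m" unfolding runs_def using all left right by auto
  then show ?thesis using \<open>a \<le> i\<close> \<open>i \<le> b\<close> by blast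
qed

context
  fixes M :: nat and p :: "int list"
  assumes ss: "scat_seq M p"
begin

lemma len: "length p \<ge> 3" using ss unfolding scat_seq_def Let_def by auto
lemma p0: "p!0 = -1" using ss unfolding scat_seq_def Let_def by auto
lemma pL: "p!(length p - 1) = -1" using ss unfolding scat_seq_def Let_def by auto
lemma pint: "1 \<le> i \<Longrightarrow> i \<le> length p - 2 \<Longrightarrow> 0 \<le> p!i \<and> p!i \<le> int M"
  using ss unfolding scat_seq_def Let_def by (auto simp: diff_diff_left)
lemma step: "i < length p - 1 \<Longrightarrow> p!(Suc i) = p!i + 1 \<or> p!(Suc i) = p!i - 1"
proof -
  assume i: "i < length p - 1"
  then obtain j where "{p ! i, p ! (i+1)} = {j, j+1}"
    using ss unfolding scat_seq_def Let_def by blast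
  then show ?thesis by (auto simp: doubleton_eq_iff)
qed

lemma nbr:
  assumes "i \<in> II p"
  shows "(p!(i-1) = p!i + 1 \<or> p!(i-1) = p!i - 1) \<and> (p!(i+1) = p!i + 1 \<or> p!(i+1) = p!i - 1)"
proof -
  have i: "1 \<le> i" "i \<le> length p - 2" using assms unfolding II_def by auto
  have "Suc (i-1) = i" using i by simp
  then have "p!i = p!(i-1) + 1 \<or> p!i = p!(i-1) - 1" using step[of "i-1"] i len by force
  moreover have "p!(Suc i) = p!i + 1 \<or> p!(Suc i) = p!i - 1" using step[of i] i len by simp
  ultimately show ?thesis by auto
qed

lemma run_props:
  assumes r: "(a,b) \<in> runs p m"
  shows "a \<in> II p \<and> b \<in> II p \<and> a \<le> b \<and> p!a = int m \<and> p!(a-1) = int m - 1 \<and> p!b = int m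
     \<and> p!(b+1) = int m - 1 \<and> (\<forall>k. a \<le> k \<and> k \<le> b \<longrightarrow> p!k \<ge> int m)"
proof -
  have ab: "a \<le> b" "b \<le> length p - 1" and all: "\<forall>k. a \<le> k \<and> k \<le> b \<longrightarrow> p!k \<ge> int m"
    and left: "a = 0 \<or> p!(a-1) < int m" and right: "b = length p - 1 \<or> p!(b+1) < int m"
    using r unfolding runs_def by auto
  have pa: "p!a \<ge> int m" "p!b \<ge> int m" using all ab by auto
  have a0: "a \<noteq> 0"
  proof
    assume "a = 0" then show False using pa p0 by simp
  qed
  have bL: "b \<noteq> length p - 1"
  proof
    assume "b = length p - 1" then show False using pa pL by simp
  qed
  have l: "p!(a-1) < int m" using left a0 by simp
  have rr: "p!(b+1) < int m" using right bL by simp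
  have "Suc (a-1) = a" using a0 by simp
  then have sa: "p!a = p!(a-1) + 1 \<or> p!a = p!(a-1) - 1" using step[of "a-1"] ab a0 bL by force
  have sb: "p!(Suc b) = p!b + 1 \<or> p!(Suc b) = p!b - 1" using step[of b] ab bL by simp
  have 1: "p!a = int m" "p!(a-1) = int m - 1" using sa l pa by auto
  have 2: "p!b = int m" "p!(b+1) = int m - 1" using sb rr pa by auto
  have "a \<in> II p" "b \<in> II p" using a0 ab bL unfolding II_def by auto
  then show ?thesis using 1 2 ab all by auto
qed

lemma card_runs: "card (runs p m) = card (St p m)"
proof (rule bij_betw_same_card[of fst])
  show "bij_betw fst (runs p m) (St p m)" unfolding bij_betw_def
  proof
    show "inj_on fst (runs p m)"
    proof (rule inj_onI)
      fix x y assume x: "x \<in> runs p m" and y: "y \<in> runs p m" and e: "fst x = fst y"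
      obtain a1 b1 where x1: "x = (a1,b1)" by (cases x)
      obtain a2 b2 where y1: "y = (a2,b2)" by (cases y)
      show "x = y" using run_unique[of a1 b1 p m a2 b2 a1] run_props[of a1 b1 m] run_props[of a2 b2 m]
        x y e x1 y1 by auto
    qed
    show "fst ` runs p m = St p m"
    proof
      show "fst ` runs p m \<subseteq> St p m" using run_props unfolding St_def by fastforce
      show "St p m \<subseteq> fst ` runs p m"
      proof
        fix a assume a: "a \<in> St p m"
        then have aI: "a \<in> II p" and pa: "p!a = int m" "p!(a-1) = int m - 1" unfolding St_def by auto
        have "a \<le> length p - 1" using aI unfolding II_def by auto
        then obtain a' b where r: "(a',b) \<in> runs p m" "a' \<le> a" "a \<le> b"
          using run_exists[of a p m] pa by auto
        have "a' = a"
        proof (rule ccontr)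
          assume "a' \<noteq> a"
          then have "a' \<le> a - 1" "a - 1 \<le> b" using r by auto
          then have "p!(a-1) \<ge> int m" using run_props[OF r(1)] by auto
          then show False using pa by simp
        qed
        then show "a \<in> fst ` runs p m" using r by force
      qed
    qed
  qed
qed

lemma St_split: "St p m = Up p m \<union> Pk p m" "Up p m \<inter> Pk p m = {}"
proof -
  show "St p m = Up p m \<union> Pk p m"
    unfolding St_def Up_def Pk_def by (auto dest: nbr)
  show "Up p m \<inter> Pk p m = {}" unfolding Up_def Pk_def by auto
qed

lemma finII: "finite (II p)" unfolding II_def by simp

lemma beta_Up: "beta p m = card (Up p m)"
  unfolding beta_def
proof (rule bij_betw_same_card[of fst])
  let ?LR = "{(a, b) \<in> runs p m. 2 \<le> b - a + 1}"
  show "bij_betw fst ?LR (Up p m)" unfolding bij_betw_def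
  proof
    show "inj_on fst ?LR"
    proof (rule inj_onI)
      fix x y assume x: "x \<in> ?LR" and y: "y \<in> ?LR" and e: "fst x = fst y"
      obtain a1 b1 where x1: "x = (a1,b1)" by (cases x)
      obtain a2 b2 where y1: "y = (a2,b2)" by (cases y)
      show "x = y" using run_unique[of a1 b1 p m a2 b2 a1] run_props[of a1 b1 m] run_props[of a2 b2 m]
        x y e x1 y1 by auto
    qed
    show "fst ` ?LR = Up p m"
    proof
      show "fst ` ?LR \<subseteq> Up p m"
      proof
        fix a assume "a \<in> fst ` ?LR"
        then obtain b where r: "(a,b) \<in> runs p m" "2 \<le> b - a + 1" by auto
        note rp = run_props[OF r(1)]
        have "p!(a+1) \<ge> int m" using rp r(2) by auto
        moreover have "p!(a+1) = p!a + 1 \<or> p!(a+1) = p!a - 1" using nbr rp by blast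
        ultimately show "a \<in> Up p m" using rp unfolding Up_def by auto
      qed
      show "Up p m \<subseteq> fst ` ?LR"
      proof
        fix a assume a: "a \<in> Up p m"
        then have aI: "a \<in> II p" and pa: "p!a = int m" "p!(a-1) = int m - 1" "p!(a+1) = int m + 1"
          unfolding Up_def by auto
        have aL: "a \<le> length p - 2" using aI unfolding II_def by auto
        have aL1: "a \<le> length p - 1" using aL by linarith
        have pam: "int m \<le> p!a" using pa by simp
        obtain a' b where r: "(a',b) \<in> runs p m" "a' \<le> a" "a \<le> b"
          using run_exists[OF aL1 pam] by blast
        have "a' = a"
        proof (rule ccontr)
          assume "a' \<noteq> a"
          then have "a' \<le> a - 1" "a - 1 \<le> b" using r by auto
          then have "p!(a-1) \<ge> int m" using run_props[OF r(1)] by auto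
          then show False using pa by simp
        qed
        moreover have "b \<noteq> a"
        proof
          assume "b = a"
          then show False using r(1) pa aL len unfolding runs_def by auto
        qed
        ultimately show "a \<in> fst ` ?LR" using r by force
      qed
    qed
  qed
qed

lemma beta_Dn: "beta p m = card (Dn p m)"
  unfolding beta_def
proof (rule bij_betw_same_card[of snd])
  let ?LR = "{(a, b) \<in> runs p m. 2 \<le> b - a + 1}"
  show "bij_betw snd ?LR (Dn p m)" unfolding bij_betw_def
  proof
    show "inj_on snd ?LR"
    proof (rule inj_onI)
      fix x y assume x: "x \<in> ?LR" and y: "y \<in> ?LR" and e: "snd x = snd y"
      obtain a1 b1 where x1: "x = (a1,b1)" by (cases x)
      obtain a2 b2 where y1: "y = (a2,b2)" by (cases y)
      show "x = y" using run_unique[of a1 b1 p m a2 b2 b1] run_props[of a1 b1 m] run_props[of a2 b2 m]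
        x y e x1 y1 by auto
    qed
    show "snd ` ?LR = Dn p m"
    proof
      show "snd ` ?LR \<subseteq> Dn p m"
      proof
        fix b assume "b \<in> snd ` ?LR"
        then obtain a where r: "(a,b) \<in> runs p m" "2 \<le> b - a + 1" by auto
        note rp = run_props[OF r(1)]
        have "p!(b-1) \<ge> int m" using rp r(2) by auto
        moreover have "p!(b-1) = p!b + 1 \<or> p!(b-1) = p!b - 1" using nbr rp by blast
        ultimately show "b \<in> Dn p m" using rp unfolding Dn_def by auto
      qed
      show "Dn p m \<subseteq> snd ` ?LR"
      proof
        fix b assume a: "b \<in> Dn p m"
        then have aI: "b \<in> II p" and pa: "p!b = int m" "p!(b-1) = int m + 1" "p!(b+1) = int m - 1"
          unfolding Dn_def by auto
        have aL: "b \<le> length p - 2" "1 \<le> b" using aI unfolding II_def by auto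
        have aL1: "b \<le> length p - 1" using aL by linarith
        have pam: "int m \<le> p!b" using pa by simp
        obtain a b' where r: "(a,b') \<in> runs p m" "a \<le> b" "b \<le> b'"
          using run_exists[OF aL1 pam] by blast
        have "b' = b"
        proof (rule ccontr)
          assume "b' \<noteq> b"
          then have "a \<le> b + 1" "b + 1 \<le> b'" using r by auto
          then have "p!(b+1) \<ge> int m" using run_props[OF r(1)] by auto
          then show False using pa by simp
        qed
        moreover have "a \<noteq> b"
        proof
          assume "a = b"
          then show False using r(1) pa aL unfolding runs_def by auto
        qed
        ultimately show "b \<in> snd ` ?LR" using r by force
      qed
    qed
  qed
qed

lemma St_Suc: "St p (Suc n) = Suc ` Vs p n"
proof
  show "Suc ` Vs p n \<subseteq> St p (Suc n)"
  proof
    fix x assume "x \<in> Suc ` Vs p n"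
    then obtain i where x: "x = Suc i" and i: "i \<in> II p" "p!i = int n" "p!(i+1) = int n + 1"
      unfolding Vs_def by auto
    have "Suc i \<le> length p - 1" using i unfolding II_def by auto
    moreover have "Suc i \<noteq> length p - 1" using pL i by auto
    ultimately have "Suc i \<in> II p" unfolding II_def by auto
    then show "x \<in> St p (Suc n)" using x i unfolding St_def by auto
  qed
  show "St p (Suc n) \<subseteq> Suc ` Vs p n"
  proof
    fix a assume a: "a \<in> St p (Suc n)"
    then have aI: "a \<in> II p" "p!a = int n + 1" "p!(a-1) = int n" unfolding St_def by auto
    have "a - 1 \<noteq> 0" using aI p0 by auto
    then have "a - 1 \<in> II p" using aI unfolding II_def by auto
    moreover have "Suc (a-1) = a" using aI unfolding II_def by auto
    ultimately have "a - 1 \<in> Vs p n" using aI unfolding Vs_def by auto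
    then show "a \<in> Suc ` Vs p n" using \<open>Suc (a-1) = a\<close> by force
  qed
qed

lemma Vs_split: "Vs p n = Vl p n \<union> Up p n" "Vl p n \<inter> Up p n = {}"
proof -
  show "Vs p n = Vl p n \<union> Up p n"
    unfolding Vs_def Vl_def Up_def by (auto dest: nbr)
  show "Vl p n \<inter> Up p n = {}" unfolding Vl_def Up_def by auto
qed

lemma Vs_M: "Vs p M = {}"
proof -
  { fix i assume i: "i \<in> II p" "p!(i+1) = int M + 1"
    have "i + 1 \<le> length p - 1" using i unfolding II_def by auto
    moreover have "i + 1 \<noteq> length p - 1" using pL i by auto
    ultimately have "i + 1 \<le> length p - 2" by auto
    then have "p!(i+1) \<le> int M" using pint[of "i+1"] by auto
    then have False using i by simp }
  then show ?thesis unfolding Vs_def by auto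
qed

lemma finsets: "finite (Vl p n)" "finite (Up p n)" "finite (Pk p n)" "finite (Dn p n)" "finite (Vs p n)"
  using finII unfolding Vl_def Up_def Pk_def Dn_def Vs_def by auto

lemma kappa_eq: "kappa p n = card (Pk p n) + beta p n"
  unfolding kappa_def using card_runs St_split beta_Up finsets
  by (simp add: card_Un_disjoint)

lemma kt_eq: "n \<le> M \<Longrightarrow> kappa_tilde M p n = card (Vl p n) + beta p n"
proof -
  assume n: "n \<le> M"
  have cv: "card (Vs p n) = card (Vl p n) + beta p n"
    using Vs_split beta_Up finsets by (simp add: card_Un_disjoint)
  show ?thesis
  proof (cases "n < M")
    case True
    have "kappa p (n+1) = card (Vs p n)" unfolding kappa_def using card_runs St_Suc
      by (simp add: card_image)
    then show ?thesis using True cv unfolding kappa_tilde_def by simp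
  next
    case False
    then have "n = M" using n by simp
    then show ?thesis using cv Vs_M unfolding kappa_tilde_def by simp
  qed
qed

lemma fiber: "{x \<in> II p. nat (p!x) = n} = Pk p n \<union> Vl p n \<union> (Up p n \<union> Dn p n)"
proof (rule set_eqI)
  fix x
  show "x \<in> {x \<in> II p. nat (p!x) = n} \<longleftrightarrow> x \<in> Pk p n \<union> Vl p n \<union> (Up p n \<union> Dn p n)"
  proof (cases "x \<in> II p")
    case True
    have "0 \<le> p!x" using pint True unfolding II_def by auto
    then have e: "nat (p!x) = n \<longleftrightarrow> p!x = int n" by auto
    show ?thesis using nbr[OF True] True e unfolding Pk_def Vl_def Up_def Dn_def by auto
  next
    case False
    then show ?thesis unfolding Pk_def Vl_def Up_def Dn_def by auto
  qed
qed

lemma fiber_prod: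
  "(\<Prod>i\<in>{x \<in> II p. nat (p!x) = n}. local_weight R p i)
   = R n ^ card (Pk p n) * (- R n) ^ card (Vl p n) * trans_coeff R n ^ (card (Up p n) + card (Dn p n))"
proof -
  have d1: "(Pk p n \<union> Vl p n) \<inter> (Up p n \<union> Dn p n) = {}" "Pk p n \<inter> Vl p n = {}" "Up p n \<inter> Dn p n = {}"
    unfolding Pk_def Vl_def Up_def Dn_def by auto
  have w1: "\<And>i. i \<in> Pk p n \<Longrightarrow> local_weight R p i = R n"
    unfolding Pk_def local_weight_def Let_def by auto
  have w2: "\<And>i. i \<in> Vl p n \<Longrightarrow> local_weight R p i = - R n"
    unfolding Vl_def local_weight_def Let_def by auto
  have w3: "\<And>i. i \<in> Up p n \<union> Dn p n \<Longrightarrow> local_weight R p i = trans_coeff R n"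
    unfolding Up_def Dn_def local_weight_def Let_def by auto
  have "(\<Prod>i\<in>{x \<in> II p. nat (p!x) = n}. local_weight R p i)
      = (\<Prod>i\<in>Pk p n. local_weight R p i) * (\<Prod>i\<in>Vl p n. local_weight R p i)
        * ((\<Prod>i\<in>Up p n. local_weight R p i) * (\<Prod>i\<in>Dn p n. local_weight R p i))"
    unfolding fiber using d1 finsets by (simp add: prod.union_disjoint)
  also have "\<dots> = R n ^ card (Pk p n) * (- R n) ^ card (Vl p n)
      * (trans_coeff R n ^ card (Up p n) * trans_coeff R n ^ card (Dn p n))"
    using w1 w2 w3 by simp
  finally show ?thesis by (simp add: power_add)
qed

end

theorem lemma1:
  fixes M :: nat and R :: "nat \<Rightarrow> real" and p :: "int list"
  assumes "M \<ge> 1"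
    and "\<And>n. n \<le> M \<Longrightarrow> -1 < R n \<and> R n < 1"
    and "scat_seq M p"
  shows "weight R p =
    (\<Prod>n\<in>{0..M}.
        (- R n) powi (int (kappa_tilde M p n) - int (beta p n))
      * (R n) powi (int (kappa p n) - int (beta p n))
      * (trans_coeff R n) ^ (2 * beta p n))"
proof -
  note ss = assms(3)
  have "weight R p = (\<Prod>i\<in>II p. local_weight R p i)" unfolding weight_def II_def by simp
  also have "\<dots> = (\<Prod>n\<in>{0..M}. \<Prod>i\<in>{x \<in> II p. nat (p!x) = n}. local_weight R p i)"
  proof (rule prod.group[symmetric])
    show "finite (II p)" using finII[OF ss] .
    show "finite {0..M}" by simp
    show "(\<lambda>x. nat (p!x)) ` II p \<subseteq> {0..M}" using pint[OF ss] unfolding II_def by force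
  qed
  also have "\<dots> = (\<Prod>n\<in>{0..M}.
        (- R n) powi (int (kappa_tilde M p n) - int (beta p n))
      * (R n) powi (int (kappa p n) - int (beta p n))
      * (trans_coeff R n) ^ (2 * beta p n))"
  proof (rule prod.cong[OF refl])
    fix n assume "n \<in> {0..M}"
    then have n: "n \<le> M" by simp
    have "int (kappa_tilde M p n) - int (beta p n) = int (card (Vl p n))"
      using kt_eq[OF ss n] by simp
    moreover have "int (kappa p n) - int (beta p n) = int (card (Pk p n))"
      using kappa_eq[OF ss] by simp
    moreover have "card (Up p n) + card (Dn p n) = 2 * beta p n"
      using beta_Up[OF ss] beta_Dn[OF ss] by simp
    ultimately show "(\<Prod>i\<in>{x \<in> II p. nat (p!x) = n}. local_weight R p i) =
        (- R n) powi (int (kappa_tilde M p n) - int (beta p n))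
      * (R n) powi (int (kappa p n) - int (beta p n))
      * (trans_coeff R n) ^ (2 * beta p n)"
      using fiber_prod[OF ss, of R n] by (simp add: mult_ac)
  qed
  finally show ?thesis .
qed

end
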